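(* Let $\Sigma$ be a set and let $y,z\in F(\Sigma)$ be such that the word $y^{-1}zy$ is freely reduced and non-trivial, with $z$ cyclically reduced and not a proper power. Then: (1) if $y=1$ and there are $i\in\mathbb{Z}$ and $g,h\in F(\Sigma)$ such that $z^i=gzh$ with the word $g\cdot z\cdot h$ freely reduced, then $i\geq 1$ and $g,h\in\langle z\rangle$; (2) if $y\neq 1$ and there are $i,j\in\mathbb{Z}$ and $g,h\in F(\Sigma)$ such that $y^{-1}z^iy=gy^{-1}z^jyh$ with the word $g\cdot y^{-1}z^jy\cdot h$ freely reduced, then $g=h=1$ and $i=j$.
   Context: $F(\Sigma)$ is the free group on $\Sigma$. An element $w$ is a proper power if $w=u^n$ for some $u\in F(\Sigma)$ and $n\geq 2$. *)

theory Defs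
  imports Main
begin

text \<open>Free group F(S) over the generators of type 'a, with elements represented by
  freely reduced words. A letter is a pair (b, a): (False, a) is the generator a,
  (True, a) its inverse.\<close>

type_synonym 'a letter = "bool \<times> 'a"
type_synonym 'a word = "'a letter list"

definition inv_letter :: "'a letter \<Rightarrow> 'a letter" where
  "inv_letter x = (\<not> fst x, snd x)"

fun reduced :: "'a word \<Rightarrow> bool" where
  "reduced [] = True"
| "reduced [x] = True"
| "reduced (x # y # ys) = (y \<noteq> inv_letter x \<and> reduced (y # ys))"

definition inv_word :: "'a word \<Rightarrow> 'a word" where
  "inv_word w = rev (map inv_letter w)"

fun cancel :: "'a letter \<Rightarrow> 'a word \<Rightarrow> 'a word" where
  "cancel x [] = [x]"
| "cancel x (y # ys) = (if y = inv_letter x then ys else x # y # ys)"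

fun reduce :: "'a word \<Rightarrow> 'a word" where
  "reduce [] = []"
| "reduce (x # w) = cancel x (reduce w)"

definition free_group :: "'a word set" where
  "free_group = {w. reduced w}"

definition fmult :: "'a word \<Rightarrow> 'a word \<Rightarrow> 'a word" where
  "fmult u v = reduce (u @ v)"

definition fpow :: "'a word \<Rightarrow> int \<Rightarrow> 'a word" where
  "fpow w i = (if 0 \<le> i then reduce (concat (replicate (nat i) w))
               else reduce (concat (replicate (nat (- i)) (inv_word w))))"

definition cyclically_reduced :: "'a word \<Rightarrow> bool" where
  "cyclically_reduced w \<longleftrightarrow> reduced w \<and> (w = [] \<or> hd w \<noteq> inv_letter (last w))"

definition proper_power :: "'a word \<Rightarrow> bool" where
  "proper_power w \<longleftrightarrow> (\<exists>u n. u \<in> free_group \<and> n \<ge> 2 \<and> w = fpow u (int n))"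

definition cyclic_subgroup :: "'a word \<Rightarrow> 'a word set" where
  "cyclic_subgroup w = range (fpow w)"

end

theory Submission
  imports Defs
begin


lemma inv_inv[simp]: "inv_letter (inv_letter x) = x"
  by (simp add: inv_letter_def)
lemma inv_neq[simp]: "inv_letter x \<noteq> x"
  by (cases x) (simp add: inv_letter_def)
lemma inv_letter_eq_iff[simp]: "inv_letter x = inv_letter y \<longleftrightarrow> x = y"
  by (metis inv_inv)

lemma reduced_Cons: "reduced (x#xs) \<longleftrightarrow> reduced xs \<and> (xs \<noteq> [] \<longrightarrow> hd xs \<noteq> inv_letter x)"
  by (cases xs) auto

lemma reduced_append: "reduced (xs@ys) \<longleftrightarrow> reduced xs \<and> reduced ys \<and>
   (xs \<noteq> [] \<longrightarrow> ys \<noteq> [] \<longrightarrow> hd ys \<noteq> inv_letter (last xs))"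
  by (induction xs) (auto simp: reduced_Cons)

lemma inv_word_Nil[simp]: "inv_word [] = []" by (simp add: inv_word_def)
lemma inv_word_Cons[simp]: "inv_word (x#xs) = inv_word xs @ [inv_letter x]" by (simp add: inv_word_def)
lemma inv_word_append[simp]: "inv_word (xs@ys) = inv_word ys @ inv_word xs" by (simp add: inv_word_def)
lemma inv_word_inv_word[simp]: "inv_word (inv_word xs) = xs" by (simp add: inv_word_def rev_map comp_def)
lemma length_inv_word[simp]: "length (inv_word xs) = length xs" by (simp add: inv_word_def)
lemma inv_word_eq_Nil[simp]: "inv_word xs = [] \<longleftrightarrow> xs = []" by (simp add: inv_word_def)
lemma hd_inv_word: "xs \<noteq> [] \<Longrightarrow> hd (inv_word xs) = inv_letter (last xs)"
  by (simp add: inv_word_def hd_rev last_map)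
lemma last_inv_word: "xs \<noteq> [] \<Longrightarrow> last (inv_word xs) = inv_letter (hd xs)"
  by (simp add: inv_word_def last_rev hd_map)

lemma reduced_inv_word: "reduced xs \<Longrightarrow> reduced (inv_word xs)"
  by (induction xs) (auto simp: reduced_Cons reduced_append last_inv_word)

lemma reduced_nth: "reduced xs \<longleftrightarrow> (\<forall>k. Suc k < length xs \<longrightarrow> xs!Suc k \<noteq> inv_letter (xs!k))"
proof (induction xs)
  case Nil then show ?case by simp
next
  case (Cons x xs)
  show ?case
  proof
    assume r: "reduced (x#xs)"
    show "\<forall>k. Suc k < length (x#xs) \<longrightarrow> (x#xs)!Suc k \<noteq> inv_letter ((x#xs)!k)"
    proof (intro allI impI)
      fix k assume k: "Suc k < length (x#xs)"
      show "(x#xs)!Suc k \<noteq> inv_letter ((x#xs)!k)"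
      proof (cases k)
        case 0 then show ?thesis using r k by (cases xs) auto
      next
        case (Suc k') then show ?thesis using r k Cons.IH by (auto simp: reduced_Cons)
      qed
    qed
  next
    assume h: "\<forall>k. Suc k < length (x#xs) \<longrightarrow> (x#xs)!Suc k \<noteq> inv_letter ((x#xs)!k)"
    have "reduced xs" using Cons.IH h by force
    moreover have "xs \<noteq> [] \<longrightarrow> hd xs \<noteq> inv_letter x"
      using h[rule_format, of 0] by (cases xs) auto
    ultimately show "reduced (x#xs)" by (simp add: reduced_Cons)
  qed
qed

lemma inv_word_nth: "k < length xs \<Longrightarrow> inv_word xs ! k = inv_letter (xs ! (length xs - Suc k))"
  by (simp add: inv_word_def rev_nth)

lemma self_inv: assumes "reduced x" "inv_word x = x" shows "x = []"
proof (rule ccontr)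
  assume ne: "x \<noteq> []"
  let ?n = "length x"
  have e: "\<And>k. k < ?n \<Longrightarrow> x ! k = inv_letter (x ! (?n - Suc k))"
    using assms(2) inv_word_nth by metis
  show False
  proof (cases "even ?n")
    case True
    define k where "k = ?n div 2 - 1"
    have "?n \<noteq> 0" using ne by simp
    then have n: "?n = 2*k+2" using True unfolding k_def by presburger
    have "x ! k = inv_letter (x ! Suc k)" using e[of k] n by (simp add: numeral_eq_Suc)
    moreover have "x ! Suc k \<noteq> inv_letter (x ! k)" using assms(1) n unfolding reduced_nth by simp
    ultimately show False by simp
  next
    case False
    then obtain k where n: "?n = 2*k+1" using oddE by blast
    have "x ! k = inv_letter (x ! k)" using e[of k] n by simp
    then show False by (metis inv_neq)
  qed
qed

lemma reduced_cancel: "reduced w \<Longrightarrow> reduced (cancel x w)"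
  by (cases w) (auto simp: reduced_Cons)

lemma reduced_reduce: "reduced (reduce w)"
  by (induction w) (auto simp: reduced_cancel)

lemma reduce_reduced: "reduced w \<Longrightarrow> reduce w = w"
proof (induction w)
  case (Cons x w)
  then show ?case by (cases w) (auto simp: reduced_Cons)
qed simp

lemma reduce_cancel2: "reduce (x # inv_letter x # w) = reduce w"
proof -
  have r: "reduced (reduce w)" by (rule reduced_reduce)
  show ?thesis
  proof (cases "reduce w")
    case Nil then show ?thesis by simp
  next
    case (Cons a t)
    show ?thesis
    proof (cases "a = x")
      case True
      then have "t = [] \<or> hd t \<noteq> inv_letter x" using r Cons by (auto simp: reduced_Cons)
      then show ?thesis using Cons True by (cases t) auto
    next
      case False
      then show ?thesis using Cons by auto
    qed
  qed
qed

lemma reduce_append_right: "reduce (u @ reduce v) = reduce (u @ v)"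
  by (induction u) (auto simp: reduce_reduced reduced_reduce)

lemma reduce_append_left: "reduce (reduce u @ v) = reduce (u @ v)"
proof (induction u)
  case Nil then show ?case by simp
next
  case (Cons x u)
  have "reduce ((x#u) @ v) = cancel x (reduce (reduce u @ v))" using Cons by simp
  also have "\<dots> = reduce (x # reduce u @ v)" by simp
  also have "\<dots> = reduce (cancel x (reduce u) @ v)"
  proof (cases "reduce u")
    case Nil then show ?thesis by simp
  next
    case (Cons a t)
    then show ?thesis
    proof (cases "a = inv_letter x")
      case True
      then show ?thesis using Cons reduce_cancel2[of x "t @ v"] by simp
    qed simp
  qed
  finally show ?case by simp
qed

lemma fmult_fmult: "fmult (fmult a b) c = reduce (a @ b @ c)"
  by (simp add: fmult_def reduce_append_left)

lemma reduce_inv_word_self: "reduce (inv_word y @ y) = []"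
proof (induction y)
  case Nil then show ?case by simp
next
  case (Cons x y)
  have "reduce (inv_word (x#y) @ x # y) = reduce (inv_word y @ (inv_letter x # x # y))"
    by simp
  also have "\<dots> = reduce (inv_word y @ reduce (inv_letter x # x # y))"
    by (rule reduce_append_right[symmetric])
  also have "reduce (inv_letter x # x # y) = reduce y"
    using reduce_cancel2[of "inv_letter x" y] by simp
  finally show ?case by (simp add: reduce_append_right Cons)
qed

definition pw :: "'a list \<Rightarrow> nat \<Rightarrow> 'a list" where
  "pw w n = concat (replicate n w)"

lemma pw_0[simp]: "pw w 0 = []" by (simp add: pw_def)
lemma pw_Suc: "pw w (Suc n) = w @ pw w n" by (simp add: pw_def)
lemma pw_add: "pw w (a + b) = pw w a @ pw w b" by (simp add: pw_def replicate_add)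
lemma length_pw[simp]: "length (pw w n) = n * length w" by (simp add: pw_def length_concat sum_list_replicate)
lemma pw_Suc': "pw w (Suc n) = pw w n @ w"
  using pw_add[of w n 1] by (simp add: pw_def)
lemma inv_word_pw: "inv_word (pw w n) = pw (inv_word w) n"
  by (induction n) (simp, metis pw_Suc pw_Suc' inv_word_append)

lemma hd_pw: "w \<noteq> [] \<Longrightarrow> n > 0 \<Longrightarrow> hd (pw w n) = hd w"
  by (cases n) (auto simp: pw_Suc)

lemma cyc_pw: "cyclically_reduced w \<Longrightarrow> reduced (pw w n)"
proof (induction n)
  case 0 then show ?case by simp
next
  case (Suc n)
  show ?case
  proof (cases "w = [] \<or> n = 0")
    case True then show ?thesis using Suc by (auto simp: pw_Suc cyclically_reduced_def)
  next
    case False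
    then show ?thesis using Suc
      by (auto simp: pw_Suc reduced_append cyclically_reduced_def hd_pw)
  qed
qed

lemma fpow_nat: "cyclically_reduced w \<Longrightarrow> fpow w (int n) = pw w n"
  by (simp add: fpow_def pw_def[symmetric] reduce_reduced cyc_pw)

lemma cyc_inv: "cyclically_reduced w \<Longrightarrow> cyclically_reduced (inv_word w)"
  by (auto simp: cyclically_reduced_def reduced_inv_word hd_inv_word last_inv_word)

lemma fpow_neg: "cyclically_reduced w \<Longrightarrow> i < 0 \<Longrightarrow> fpow w i = pw (inv_word w) (nat (- i))"
  using reduce_reduced[OF cyc_pw[OF cyc_inv]] by (simp add: fpow_def pw_def[symmetric])

lemma comm_pw: "xs @ ys = ys @ xs \<Longrightarrow> \<exists>r a b. xs = pw r a \<and> ys = pw r b"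
proof (induction "length xs + length ys" arbitrary: xs ys rule: less_induct)
  case less
  show ?case
  proof (cases "xs = [] \<or> ys = []")
    case True
    then show ?thesis
      by (metis pw_0 append_Nil2 pw_Suc)
  next
    case False
    show ?thesis
    proof (cases "length xs \<le> length ys")
      case True
      then obtain t where t: "ys = xs @ t" using less.prems
        by (metis append_eq_append_conv2 append_eq_conv_conj append_take_drop_id drop_all
            le_antisym nat_le_linear take_all_iff)
      have "xs @ t = t @ xs" using less.prems t by simp
      moreover have "length xs + length t < length xs + length ys" using t False by simp
      ultimately obtain r a b where "xs = pw r a" "t = pw r b" using less by blast
      then show ?thesis using t by (metis pw_add)
    next
      case False': False
      then obtain t where t: "xs = ys @ t" using less.prems
        by (metis append_eq_append_conv2 append_eq_conv_conj append_take_drop_id drop_all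
            le_antisym nat_le_linear take_all_iff)
      have "t @ ys = ys @ t" using less.prems t by simp
      moreover have "length t + length ys < length xs + length ys" using t False by simp
      ultimately obtain r a b where "t = pw r a" "ys = pw r b" using less by blast
      then show ?thesis using t by (metis pw_add)
    qed
  qed
qed

definition prim :: "'a word \<Rightarrow> bool" where
  "prim w \<longleftrightarrow> (\<forall>u s. w = u @ s \<longrightarrow> s @ u = w \<longrightarrow> u = [] \<or> s = [])"

lemma prim_of: assumes "reduced z" "\<not> proper_power z" shows "prim z"
  unfolding prim_def
proof (intro allI impI)
  fix u s assume e1: "z = u @ s" and e2: "s @ u = z"
  show "u = [] \<or> s = []"
  proof (rule ccontr)
    assume ne: "\<not> (u = [] \<or> s = [])"
    from e1 e2 have "u @ s = s @ u" by simp
    then obtain r a b where ra: "u = pw r a" "s = pw r b" using comm_pw by blast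
    have "a \<noteq> 0" "b \<noteq> 0" using ne ra pw_0 by metis+
    then have z: "z = pw r (a+b)" using ra e1 by (simp add: pw_add)
    obtain a' where "a = Suc a'" using \<open>a \<noteq> 0\<close> not0_implies_Suc by blast
    then have "z = r @ pw r (a' + b)" using z by (simp add: pw_Suc)
    then have "reduced r" using assms(1) by (simp add: reduced_append)
    have "fpow r (int (a+b)) = z"
      using z assms(1) by (simp add: fpow_def pw_def[symmetric] reduce_reduced del: of_nat_add)
    moreover have "a + b \<ge> 2" using \<open>a \<noteq> 0\<close> \<open>b \<noteq> 0\<close> by simp
    ultimately have "proper_power z" unfolding proper_power_def free_group_def
      using \<open>reduced r\<close> by (intro exI[of _ r] exI[of _ "a+b"]) simp
    then show False using assms(2) by simp
  qed
qed

lemma prim_inv: assumes "prim z" shows "prim (inv_word z)"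
  unfolding prim_def
proof (intro allI impI)
  fix u s assume "inv_word z = u @ s" "s @ u = inv_word z"
  then have "z = inv_word s @ inv_word u" "inv_word u @ inv_word s = z"
    by (metis inv_word_append inv_word_inv_word)+
  then have "inv_word s = [] \<or> inv_word u = []" using assms unfolding prim_def by blast
  then show "u = [] \<or> s = []" by auto
qed

lemma app_split: "xs @ ys = zs @ ts \<Longrightarrow> length xs \<le> length zs \<Longrightarrow> \<exists>us. zs = xs @ us \<and> ys = us @ ts"
  by (auto simp: append_eq_append_conv2)

lemma occ:
  assumes red: "reduced w" and ne: "w \<noteq> []" and pr: "prim w"
    and eq: "pw w p = A @ X @ B" and lx: "length X = length w"
    and xw: "X = w \<or> X = inv_word w"
  shows "X = w \<and> (\<exists>k. A = pw w k)"
proof -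
  let ?m = "length w"
  define c where "c = length A div ?m"
  define r where "r = length A mod ?m"
  have m0: "?m > 0" using ne by simp
  have a: "length A = c * ?m + r" unfolding c_def r_def by simp
  have r_lt: "r < ?m" unfolding r_def using m0 by simp
  have len: "p * ?m = length A + ?m + length B" using eq lx by (metis length_append length_pw add.assoc)
  have cp: "c < p"
  proof -
    have "c * ?m + ?m \<le> p * ?m" using len a by simp
    then have "(c+1) * ?m \<le> p * ?m" by simp
    then have "c + 1 \<le> p" using m0 by (metis mult_le_cancel2 not_gr0)
    then show ?thesis by simp
  qed
  have split: "pw w p = pw w c @ pw w (p - c)" using cp pw_add[of w c "p-c"] by simp
  obtain A2 where A: "A = pw w c @ A2" and e2: "pw w (p - c) = A2 @ X @ B"
  proof -
    have "pw w c @ pw w (p - c) = A @ X @ B" using eq split by simp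
    moreover have "length (pw w c) \<le> length A" using a by simp
    ultimately obtain us where "A = pw w c @ us" "pw w (p - c) = us @ X @ B"
      using app_split by blast
    then show ?thesis using that by blast
  qed
  have lA2: "length A2 = r" using A a by simp
  show ?thesis
  proof (cases "r = 0")
    case True
    then have "A2 = []" using lA2 by simp
    moreover obtain p' where "p - c = Suc p'" using cp by (metis Suc_diff_Suc)
    ultimately have "w @ pw w p' = X @ B" using e2 by (simp add: pw_Suc)
    then have "X = w" using lx by (metis append_eq_append_conv)
    then show ?thesis using A \<open>A2 = []\<close> by auto
  next
    case False
    have "p - c \<ge> 2"
    proof -
      have "c * ?m + r + ?m \<le> p * ?m" using len a by simp
      then have "(c+1) * ?m < p * ?m" using False by simp
      then have "c + 1 < p" using m0 by (metis mult_less_cancel2)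
      then show ?thesis by simp
    qed
    then obtain p' where "p - c = Suc (Suc p')" by (metis Suc_diff_Suc add_2_eq_Suc' le_add_diff_inverse2)
    then have e3: "w @ w @ pw w p' = A2 @ X @ B" using e2 by (simp add: pw_Suc)
    define u where "u = take r w"
    define s where "s = drop r w"
    have wus: "w = u @ s" unfolding u_def s_def by simp
    have lu: "length u = r" "length s = ?m - r" unfolding u_def s_def using r_lt by auto
    obtain us where "w = A2 @ us" using app_split[OF e3[symmetric]] lA2 r_lt by auto
    then have "A2 = u" unfolding u_def using lA2 by simp
    then have "s @ w @ pw w p' = X @ B" using e3 wus by simp
    then have "s @ u @ (s @ pw w p') = X @ B" using wus by simp
    then have "take ?m (s @ u @ (s @ pw w p')) = take ?m (X @ B)" by simp
    then have X: "X = s @ u" using lx lu r_lt by simp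
    have u0: "u \<noteq> []" "s \<noteq> []" using lu False r_lt by auto
    show ?thesis
    proof (cases "X = w")
      case True
      then show ?thesis using pr u0 X wus unfolding prim_def by blast
    next
      case False
      then have "inv_word s @ inv_word u = s @ u" using xw X wus by simp
      then have "inv_word s = s" by (metis append_eq_append_conv length_inv_word)
      moreover have "reduced s" using red wus by (simp add: reduced_append)
      ultimately show ?thesis using self_inv u0 by blast
    qed
  qed
qed

lemma fpow_cases: "cyclically_reduced z \<Longrightarrow> fpow z i = pw (if i \<ge> 0 then z else inv_word z) (nat \<bar>i\<bar>)"
proof (cases "i \<ge> 0")
  case True
  assume c: "cyclically_reduced z"
  have "fpow z (int (nat i)) = pw z (nat i)" by (rule fpow_nat[OF c])
  then show ?thesis using True by simp
next
  case False
  assume c: "cyclically_reduced z"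
  then show ?thesis using fpow_neg[OF c] False by simp
qed

lemma no_g:
  assumes cz: "cyclically_reduced z" and zne: "z \<noteq> []" and pz: "prim z" and yne: "y \<noteq> []"
    and red: "reduced (inv_word y @ z @ y)"
    and w: "w = z \<or> w = inv_word z" and w': "w' = z \<or> w' = inv_word z" and q: "q > 0"
    and eq: "inv_word y @ pw w p @ y = g @ inv_word y @ pw w' q @ y @ h"
  shows "g = []"
proof (rule ccontr)
  assume gne: "g \<noteq> []"
  let ?Y = "inv_word y"
  let ?m = "length z"
  have lw: "length w = ?m" "length w' = ?m" using w w' by auto
  have wred: "reduced w" "w \<noteq> []" "prim w"
    using w cz zne pz prim_inv[OF pz] cyc_inv[OF cz] unfolding cyclically_reduced_def
    by (metis inv_word_eq_Nil)+
  define A where "A = drop (length ?Y) (g @ ?Y)"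
  have lA: "length A = length g" unfolding A_def by simp
  have Ane: "A \<noteq> []" using lA gne by auto
  have "drop (length ?Y) (?Y @ pw w p @ y) = drop (length ?Y) (g @ ?Y @ pw w' q @ y @ h)"
    using eq by simp
  then have e1: "pw w p @ y = A @ pw w' q @ y @ h" unfolding A_def
    by (simp add: drop_append)
  obtain q' where q': "q = Suc q'" using q not0_implies_Suc by blast
  have e2: "(A @ w') @ (pw w' q' @ y @ h) = pw w p @ y" using e1 q' by (simp add: pw_Suc)
  have "length (?Y @ pw w p @ y) = length (g @ ?Y @ pw w' q @ y @ h)" using eq by simp
  then have "p * ?m = length g + q * ?m + length h" using lw by simp
  then have "length (A @ w') \<le> length (pw w p)" using lA lw q' by simp
  then obtain us where "pw w p = (A @ w') @ us" using app_split[OF e2] by blast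
  then have "pw w p = A @ w' @ us" by simp
  from occ[OF wred this] lw w w' obtain k where Ak: "A = pw w k" by auto
  then obtain k' where "k = Suc k'" using Ane by (cases k) auto
  then have "last A = last w" using Ak by (simp add: pw_Suc' wred(2))
  moreover have "last A = last ?Y"
  proof -
    have "last A = last (g @ ?Y)" unfolding A_def using gne by (intro last_drop) simp
    then show ?thesis using yne by simp
  qed
  ultimately have lY: "last ?Y = last w" by simp
  have j1: "hd z \<noteq> inv_letter (last ?Y)" using red zne yne by (auto simp: reduced_append)
  have j2: "hd y \<noteq> inv_letter (last z)" using red zne yne by (auto simp: reduced_append)
  have lY': "last ?Y = inv_letter (hd y)" using yne by (simp add: last_inv_word)
  show False
  proof (cases "w = z")
    case True
    then show False using lY lY' j2 by (metis inv_inv)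
  next
    case False
    then have "w = inv_word z" using w by simp
    then show False using lY j1 zne by (simp add: last_inv_word)
  qed
qed

lemma part1:
  assumes cz: "cyclically_reduced z" and zne: "z \<noteq> []" and pz: "prim z"
    and eq: "fpow z i = fmult (fmult g z) h" and red: "reduced (g @ z @ h)"
  shows "i \<ge> 1 \<and> g \<in> cyclic_subgroup z \<and> h \<in> cyclic_subgroup z"
proof -
  have e: "fpow z i = g @ z @ h" using eq red by (simp add: fmult_fmult reduce_reduced)
  have zred: "reduced z" using cz by (simp add: cyclically_reduced_def)
  show ?thesis
  proof (cases "i \<ge> 0")
    case False
    then have "pw (inv_word z) (nat \<bar>i\<bar>) = g @ z @ h" using e fpow_cases[OF cz, of i] by simp
    from occ[OF reduced_inv_word[OF zred] _ prim_inv[OF pz] this]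
    have "z = inv_word z" using zne by simp
    then have "z = []" using self_inv[OF zred] by simp
    then show ?thesis using zne by simp
  next
    case True
    define n where "n = nat i"
    have pe: "pw z n = g @ z @ h" using e fpow_cases[OF cz, of i] True by (simp add: n_def)
    from occ[OF zred zne pz pe] obtain k where gk: "g = pw z k" by auto
    have len: "n * length z = k * length z + length z + length h"
      using arg_cong[OF pe, of length] gk by simp
    then have "k * length z + length z \<le> n * length z" by simp
    then have "(k+1) * length z \<le> n * length z" by simp
    then have kn: "k + 1 \<le> n" using zne by (metis mult_le_cancel2 length_greater_0_conv)
    have "pw z n = pw z (k+1) @ pw z (n - (k+1))" using kn pw_add[of z "k+1" "n-(k+1)"] by simp
    then have "pw z k @ z @ pw z (n - (k+1)) = g @ z @ h" using pe by (simp add: pw_Suc')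
    then have hk: "h = pw z (n - (k+1))" using gk by simp
    have "g = fpow z (int k)" "h = fpow z (int (n - (k+1)))" using gk hk fpow_nat[OF cz] by auto
    then have "g \<in> cyclic_subgroup z" "h \<in> cyclic_subgroup z" unfolding cyclic_subgroup_def by auto
    moreover have "i \<ge> 1" using kn True n_def by simp
    ultimately show ?thesis by simp
  qed
qed

lemma part2:
  assumes cz: "cyclically_reduced z" and zne: "z \<noteq> []" and pz: "prim z" and yne: "y \<noteq> []"
    and red: "reduced (inv_word y @ z @ y)"
    and eq: "fmult (fmult (inv_word y) (fpow z i)) y =
                 fmult (fmult (fmult (fmult g (inv_word y)) (fpow z j)) y) h"
    and red2: "reduced (g @ inv_word y @ fpow z j @ y @ h)"
  shows "g = [] \<and> h = [] \<and> i = j"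
proof -
  let ?Y = "inv_word y"
  let ?m = "length z"
  define w where "w = (if i \<ge> 0 then z else inv_word z)"
  define p where "p = nat \<bar>i\<bar>"
  define w' where "w' = (if j \<ge> 0 then z else inv_word z)"
  define q where "q = nat \<bar>j\<bar>"
  have fi: "fpow z i = pw w p" unfolding w_def p_def by (rule fpow_cases[OF cz])
  have fj: "fpow z j = pw w' q" unfolding w'_def q_def by (rule fpow_cases[OF cz])
  have ww: "w = z \<or> w = inv_word z" "w' = z \<or> w' = inv_word z" unfolding w_def w'_def by auto
  have cw: "cyclically_reduced w" using cz cyc_inv[OF cz] w_def by simp
  have zred: "reduced z" using cz by (simp add: cyclically_reduced_def)
  have j1: "hd z \<noteq> inv_letter (last ?Y)" using red zne yne by (auto simp: reduced_append)
  have j2: "hd y \<noteq> inv_letter (last z)" using red zne yne by (auto simp: reduced_append)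
  have lY': "last ?Y = inv_letter (hd y)" using yne by (simp add: last_inv_word)
  have rhs: "fmult (fmult (fmult (fmult g ?Y) (fpow z j)) y) h = g @ ?Y @ fpow z j @ y @ h"
    using red2 by (simp add: fmult_def reduce_append_left reduce_reduced)
  have lhs: "fmult (fmult ?Y (fpow z i)) y = reduce (?Y @ pw w p @ y)"
    using fi by (simp add: fmult_def reduce_append_left)
  have q0: "q > 0"
  proof (rule ccontr)
    assume "\<not> q > 0"
    then have "fpow z j = []" using fj by simp
    then have "reduced (?Y @ y)" using red2 by (simp add: reduced_append)
    then show False using yne lY' by (auto simp: reduced_append)
  qed
  have p0: "p > 0"
  proof (rule ccontr)
    assume "\<not> p > 0"
    then have "reduce (?Y @ pw w p @ y) = []" using reduce_inv_word_self by simp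
    then show False using eq lhs rhs yne by simp
  qed
  have wne: "w \<noteq> []" using ww zne by (metis inv_word_eq_Nil)
  have "reduced (?Y @ pw w p @ y)"
  proof -
    have r1: "reduced (pw w p)" by (rule cyc_pw[OF cw])
    have h1: "hd (pw w p) = hd w" "last (pw w p) = last w"
      using p0 wne hd_pw by (auto simp: pw_Suc' gr0_conv_Suc)
    have ne1: "pw w p \<noteq> []" using p0 wne by (auto simp: gr0_conv_Suc pw_Suc)
    have a: "hd w \<noteq> inv_letter (last ?Y)"
      using ww j1 j2 lY' zne by (auto simp: hd_inv_word)
    have b: "hd y \<noteq> inv_letter (last w)"
      using ww j1 j2 lY' zne by (auto simp: last_inv_word)
    show ?thesis using r1 h1 ne1 a b yne red reduced_inv_word[of y]
      by (auto simp: reduced_append)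
  qed
  then have E: "?Y @ pw w p @ y = g @ ?Y @ pw w' q @ y @ h"
    using eq lhs rhs fj by (simp add: reduce_reduced)
  have g0: "g = []" by (rule no_g[OF cz zne pz yne red ww q0 E])
  have E': "?Y @ pw (inv_word w) p @ y = inv_word h @ ?Y @ pw (inv_word w') q @ y @ inv_word g"
    using arg_cong[OF E, of inv_word] by (simp add: inv_word_pw)
  have ww': "inv_word w = z \<or> inv_word w = inv_word z" "inv_word w' = z \<or> inv_word w' = inv_word z"
    using ww by auto
  have "inv_word h = []" by (rule no_g[OF cz zne pz yne red ww' q0 E'])
  then have h0: "h = []" by simp
  have P: "pw w p = pw w' q" using E g0 h0 by simp
  have lw: "length w = ?m" "length w' = ?m" using ww by auto
  have "p * ?m = q * ?m" using arg_cong[OF P, of length] lw by simp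
  then have pq: "p = q" using zne by simp
  obtain q' where q': "q = Suc q'" using q0 not0_implies_Suc by blast
  have pe: "pw w p = [] @ w' @ pw w' q'" using P q' by (simp add: pw_Suc)
  have rw: "reduced w" using cw unfolding cyclically_reduced_def by simp
  have primw: "prim w" using prim_inv[OF pz] pz w_def by simp
  have xw: "w' = w \<or> w' = inv_word w" using ww by auto
  have lw': "length w' = length w" using lw by simp
  have "w' = w \<and> (\<exists>k. [] = pw w k)" by (rule occ[OF rw wne primw pe lw' xw])
  then have "w' = w" by simp
  have zz: "z \<noteq> inv_word z" using self_inv[OF zred] zne by auto
  have "(i \<ge> 0) = (j \<ge> 0)" using \<open>w' = w\<close> zz unfolding w_def w'_def by (auto split: if_splits)
  then have "i = j" using pq p_def q_def by (cases "i \<ge> 0") auto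
  then show ?thesis using g0 h0 by simp
qed


theorem lemma2p1:
  fixes y z :: "'a word"
  assumes "y \<in> free_group" and "z \<in> free_group"
    and "reduced (inv_word y @ z @ y)" and "inv_word y @ z @ y \<noteq> []"
    and "cyclically_reduced z" and "\<not> proper_power z"
  shows "(y = [] \<longrightarrow>
            (\<forall>(i::int) g h. g \<in> free_group \<and> h \<in> free_group \<and>
               fpow z i = fmult (fmult g z) h \<and> reduced (g @ z @ h)
               \<longrightarrow> i \<ge> 1 \<and> g \<in> cyclic_subgroup z \<and> h \<in> cyclic_subgroup z))
       \<and> (y \<noteq> [] \<longrightarrow>
            (\<forall>(i::int) (j::int) g h. g \<in> free_group \<and> h \<in> free_group \<and>
               fmult (fmult (inv_word y) (fpow z i)) y =
                 fmult (fmult (fmult (fmult g (inv_word y)) (fpow z j)) y) h \<and>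
               reduced (g @ inv_word y @ fpow z j @ y @ h)
               \<longrightarrow> g = [] \<and> h = [] \<and> i = j))"
proof (rule conjI; intro impI allI)
  have zred: "reduced z" using assms(2) by (simp add: free_group_def)
  have pz: "prim z" by (rule prim_of[OF zred assms(6)])
  have zne: "z \<noteq> []"
  proof
    assume "z = []"
    then have "reduced (inv_word y @ y)" "y \<noteq> []" using assms(3,4) by auto
    then show False by (auto simp: reduced_append last_inv_word)
  qed
  {
    fix i :: int and g h
    assume "y = []"
    assume H: "g \<in> free_group \<and> h \<in> free_group \<and> fpow z i = fmult (fmult g z) h \<and> reduced (g @ z @ h)"
    show "i \<ge> 1 \<and> g \<in> cyclic_subgroup z \<and> h \<in> cyclic_subgroup z"
      using part1[OF assms(5) zne pz] H by blast
  }
  {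
    fix i j :: int and g h
    assume "y \<noteq> []"
    assume H: "g \<in> free_group \<and> h \<in> free_group \<and>
               fmult (fmult (inv_word y) (fpow z i)) y =
                 fmult (fmult (fmult (fmult g (inv_word y)) (fpow z j)) y) h \<and>
               reduced (g @ inv_word y @ fpow z j @ y @ h)"
    show "g = [] \<and> h = [] \<and> i = j"
      using part2[OF assms(5) zne pz \<open>y \<noteq> []\<close> assms(3)] H by blast
  }
qed

end
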